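(* There exist absolute constants $c_1,c_2,C_0>0$ such that the following holds. Suppose $\delta\le e^{-1}$, $C_{n,\delta}\ge c_1\log(n/\delta)$, and $k\ge c_2\, b\,(C_{n,\delta}+1)\max\{\Omega_{\max},E_{\max}\}$. Then with probability at least $1-\delta$, for all pairs $i,j\in\{1,\dots,n\}$, $$\|\Delta\|_{(i,j)}^2\le C_0\,\Omega_{ij}\,|E_{ij}|\,\frac{b^2C_{n,\delta}^2}{k^2}.$$
   Context: $G=(V,E)$ is an undirected connected graph on $V=\{1,\dots,n\}$, each edge with a fixed orientation $(i,j)$; $B$ is the incidence matrix (column of edge $(i,j)$ has $+1$ in row $i$, $-1$ in row $j$), $L=BB^T$, $L^\dagger$ its Moore–Penrose pseudoinverse. Weights $w$ are positive with $b\ge\max_{i,j}w_i/w_j$. For each edge $(i,j)$, $k$ independent comparisons are made, $i$ winning each with probability $p_{ij}=w_i/(w_i+w_j)$ (independent across edges); $F_{ij}$ is the fraction won by $i$, $F_{ji}=1-F_{ij}$, $R_{ij}=F_{ij}/F_{ji}$, $\rho_{ij}=w_i/w_j$, $v_{ij}=\rho_{ij}+2+\rho_{ij}^{-1}$; $F,p,R,\rho\in\mathbb{R}^{|E|}$ stack these over edges, $V=\mathrm{diag}(v_{ij})$, and $\Delta:=\log R-\log\rho-V(F-p)$. For $Q_{ij}=(e_i-e_j)(e_i-e_j)^T$, $\|x\|_{(i,j)}^2=x^TB^TL^\dagger Q_{ij}L^\dagger Bx$. $\Omega_{ij}=(e_i-e_j)^TL^\dagger(e_i-e_j)$ is the effective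 resistance, $\Omega_{\max}=\max_{i,j}\Omega_{ij}$; $E_{ij}$ is the set of edges on at least one simple path from $i$ to $j$, $E_{\max}=\max_{i,j}|E_{ij}|$. $C_{n,\delta}$ is a parameter. *)

theory Defs
  imports "HOL-Probability.Probability"
begin

(* Real n x n matrices are functions nat => nat => real, relevant on {1..n}^2;
   vectors indexed by edges are functions (nat * nat) => real, relevant on E. *)

definition verts :: "nat \<Rightarrow> nat set" where
  "verts n = {1..n}"

(* undirected simple graph on {1..n} with a fixed orientation of every edge *)
definition oriented_simple_graph :: "nat \<Rightarrow> (nat \<times> nat) set \<Rightarrow> bool" where
  "oriented_simple_graph n E \<longleftrightarrow> E \<subseteq> verts n \<times> verts n \<and>
     (\<forall>(i,j)\<in>E. i \<noteq> j \<and> (j,i) \<notin> E)"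

definition adj :: "(nat \<times> nat) set \<Rightarrow> nat \<Rightarrow> nat \<Rightarrow> bool" where
  "adj E u v \<longleftrightarrow> (u,v) \<in> E \<or> (v,u) \<in> E"

definition graph_connected :: "nat \<Rightarrow> (nat \<times> nat) set \<Rightarrow> bool" where
  "graph_connected n E \<longleftrightarrow>
     (\<forall>i\<in>verts n. \<forall>j\<in>verts n. (i,j) \<in> {(u,v). adj E u v}\<^sup>*)"

definition incidence :: "(nat \<times> nat) set \<Rightarrow> nat \<Rightarrow> nat \<times> nat \<Rightarrow> real" where
  "incidence E u e = (if e \<in> E then (if u = fst e then 1 else if u = snd e then -1 else 0) else 0)"

definition laplacian :: "(nat \<times> nat) set \<Rightarrow> nat \<Rightarrow> nat \<Rightarrow> real" where
  "laplacian E u v = (\<Sum>e\<in>E. incidence E u e * incidence E v e)"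

definition mmul :: "nat \<Rightarrow> (nat \<Rightarrow> nat \<Rightarrow> real) \<Rightarrow> (nat \<Rightarrow> nat \<Rightarrow> real) \<Rightarrow> nat \<Rightarrow> nat \<Rightarrow> real" where
  "mmul n A C i j = (\<Sum>k\<in>verts n. A i k * C k j)"

definition mtrans :: "(nat \<Rightarrow> nat \<Rightarrow> real) \<Rightarrow> nat \<Rightarrow> nat \<Rightarrow> real" where
  "mtrans A i j = A j i"

definition is_pinv :: "nat \<Rightarrow> (nat \<Rightarrow> nat \<Rightarrow> real) \<Rightarrow> (nat \<Rightarrow> nat \<Rightarrow> real) \<Rightarrow> bool" where
  "is_pinv n A X \<longleftrightarrow>
     (\<forall>i j. (i \<notin> verts n \<or> j \<notin> verts n) \<longrightarrow> X i j = 0) \<and>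
     (\<forall>i\<in>verts n. \<forall>j\<in>verts n.
        mmul n (mmul n A X) A i j = A i j \<and>
        mmul n (mmul n X A) X i j = X i j \<and>
        mtrans (mmul n A X) i j = mmul n A X i j \<and>
        mtrans (mmul n X A) i j = mmul n X A i j)"

definition pinv :: "nat \<Rightarrow> (nat \<Rightarrow> nat \<Rightarrow> real) \<Rightarrow> nat \<Rightarrow> nat \<Rightarrow> real" where
  "pinv n A = (THE X. is_pinv n A X)"

definition ediff :: "nat \<Rightarrow> nat \<Rightarrow> nat \<Rightarrow> real" where
  "ediff i j u = (if u = i then 1 else 0) - (if u = j then 1 else 0)"

definition Qmat :: "nat \<Rightarrow> nat \<Rightarrow> nat \<Rightarrow> nat \<Rightarrow> real" where
  "Qmat i j s t = ediff i j s * ediff i j t"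

definition Bvec :: "(nat \<times> nat) set \<Rightarrow> ((nat \<times> nat) \<Rightarrow> real) \<Rightarrow> nat \<Rightarrow> real" where
  "Bvec E x u = (\<Sum>e\<in>E. incidence E u e * x e)"

definition pair_seminorm_sq :: "nat \<Rightarrow> (nat \<times> nat) set \<Rightarrow> nat \<Rightarrow> nat \<Rightarrow> ((nat \<times> nat) \<Rightarrow> real) \<Rightarrow> real" where
  "pair_seminorm_sq n E i j x =
     (let Lp = pinv n (laplacian E); a = Bvec E x; M = mmul n (mmul n Lp (Qmat i j)) Lp
      in \<Sum>u\<in>verts n. \<Sum>v\<in>verts n. a u * M u v * a v)"

definition eff_res :: "nat \<Rightarrow> (nat \<times> nat) set \<Rightarrow> nat \<Rightarrow> nat \<Rightarrow> real" where
  "eff_res n E i j = (\<Sum>s\<in>verts n. \<Sum>t\<in>verts n. ediff i j s * pinv n (laplacian E) s t * ediff i j t)"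

definition eff_res_max :: "nat \<Rightarrow> (nat \<times> nat) set \<Rightarrow> real" where
  "eff_res_max n E = Max {eff_res n E i j | i j. i \<in> verts n \<and> j \<in> verts n}"

definition simple_path :: "(nat \<times> nat) set \<Rightarrow> nat \<Rightarrow> nat \<Rightarrow> nat list \<Rightarrow> bool" where
  "simple_path E i j ps \<longleftrightarrow> ps \<noteq> [] \<and> hd ps = i \<and> last ps = j \<and> distinct ps \<and>
     (\<forall>m. Suc m < length ps \<longrightarrow> adj E (ps ! m) (ps ! Suc m))"

definition edge_on_path :: "nat list \<Rightarrow> nat \<times> nat \<Rightarrow> bool" where
  "edge_on_path ps e \<longleftrightarrow> (\<exists>m. Suc m < length ps \<and>
     ((ps ! m, ps ! Suc m) = e \<or> (ps ! Suc m, ps ! m) = e))"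

definition path_edges :: "(nat \<times> nat) set \<Rightarrow> nat \<Rightarrow> nat \<Rightarrow> (nat \<times> nat) set" where
  "path_edges E i j = {e \<in> E. \<exists>ps. simple_path E i j ps \<and> edge_on_path ps e}"

definition path_edges_max :: "nat \<Rightarrow> (nat \<times> nat) set \<Rightarrow> nat" where
  "path_edges_max n E = Max {card (path_edges E i j) | i j. i \<in> verts n \<and> j \<in> verts n}"

definition Delta :: "(nat \<Rightarrow> real) \<Rightarrow> nat \<Rightarrow> ((nat \<times> nat) \<Rightarrow> nat) \<Rightarrow> nat \<times> nat \<Rightarrow> real" where
  "Delta w k X e =
     (let i = fst e; j = snd e;
          F = real (X e) / real k; p = w i / (w i + w j);
          R = F / (1 - F); \<rho> = w i / w j; v = \<rho> + 2 + 1 / \<rho>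
      in ln R - ln \<rho> - v * (F - p))"

definition comparisons :: "(nat \<times> nat) set \<Rightarrow> (nat \<Rightarrow> real) \<Rightarrow> nat \<Rightarrow> ((nat \<times> nat) \<Rightarrow> nat) pmf" where
  "comparisons E w k = Pi_pmf E 0 (\<lambda>e. binomial_pmf k (w (fst e) / (w (fst e) + w (snd e))))"

end

theory Submission
  imports Defs "Jordan_Normal_Form.Determinant"
begin

lemma exp_quad_bound:
  fixes y :: real assumes "\<bar>y\<bar> \<le> 1" shows "exp y \<le> 1 + y + y\<^sup>2"
proof -
  obtain t where t: "\<bar>t\<bar> \<le> \<bar>y\<bar>" "exp y = (\<Sum>m<3. y^m / fact m) + exp t / fact 3 * y^3"
    using Maclaurin_exp_le[of y 3] by blast
  have s: "(\<Sum>m<3. y^m / fact m) = 1 + y + y\<^sup>2/2"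
    by (simp add: eval_nat_numeral fact_numeral power2_eq_square)
  have "exp t \<le> exp 1" using t assms by simp
  also have "\<dots> \<le> 3" using exp_le by simp
  finally have et: "exp t \<le> 3" .
  have "exp t / fact 3 * y^3 \<le> \<bar>exp t / fact 3 * y^3\<bar>" by (rule abs_ge_self)
  also have "\<dots> = exp t / 6 * \<bar>y\<bar>^3" by (simp add: fact_numeral abs_mult power_abs)
  also have "\<dots> \<le> 3 / 6 * \<bar>y\<bar>^3" by (intro mult_right_mono divide_right_mono et) auto
  also have "\<dots> \<le> 1/2 * y\<^sup>2"
  proof -
    have "\<bar>y\<bar>^3 = \<bar>y\<bar> * y\<^sup>2" by (simp add: power2_eq_square power3_eq_cube abs_mult)
    also have "\<dots> \<le> 1 * y\<^sup>2" using assms by (intro mult_right_mono) auto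
    finally show ?thesis by simp
  qed
  finally show ?thesis using t(2) s by simp
qed

lemma mgf_factor:
  fixes p t :: real assumes "0 \<le> p" "p \<le> 1" "\<bar>t\<bar> \<le> 1"
  shows "p * exp t + (1 - p) \<le> exp (t * p + t\<^sup>2 * p * (1 - p))"
proof -
  define q where "q = 1 - p"
  have q: "0 \<le> q" "q \<le> 1" using assms by (auto simp: q_def)
  have e1: "exp (t*q) \<le> 1 + t*q + (t*q)\<^sup>2"
    by (rule exp_quad_bound) (use assms q in \<open>auto simp: abs_mult intro: mult_le_one\<close>)
  have e2: "exp (-(t*p)) \<le> 1 + (-(t*p)) + (-(t*p))\<^sup>2"
    by (rule exp_quad_bound) (use assms q in \<open>auto simp: abs_mult intro: mult_le_one\<close>)
  have "p * exp t + q = exp (t*p) * (p * exp (t*q) + q * exp (-(t*p)))"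
    by (simp add: algebra_simps q_def flip: exp_add)
  also have "p * exp (t*q) + q * exp (-(t*p)) \<le> p * (1 + t*q + (t*q)\<^sup>2) + q * (1 + (-(t*p)) + (-(t*p))\<^sup>2)"
    using e1 e2 assms q by (intro add_mono mult_left_mono) auto
  also have "\<dots> = 1 + t\<^sup>2 * p * q"
    by (simp add: q_def algebra_simps power2_eq_square)
  also have "\<dots> \<le> exp (t\<^sup>2 * p * q)" by (rule exp_ge_add_one_self)
  finally have "p * exp t + q \<le> exp (t*p) * exp (t\<^sup>2 * p * q)"
    by (simp add: mult_left_mono)
  thus ?thesis by (simp add: q_def exp_add)
qed

lemma binom_tail:
  fixes p t u :: real assumes p: "0 < p" "p < 1" and t: "\<bar>t\<bar> \<le> 1"
  shows "measure_pmf.prob (binomial_pmf k p) {x. t * (real x - k * p) \<ge> u}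
           \<le> exp (- u + k * t\<^sup>2 * p * (1 - p))"
proof -
  let ?A = "{x. t * (real x - k * p) \<ge> u}"
  let ?M = "binomial_pmf k p"
  have sp: "set_pmf ?M = {..k}" using p by (simp add: set_pmf_binomial)
  have "measure_pmf.prob ?M ?A = measure_pmf.prob ?M (?A \<inter> {..k})"
    using measure_Int_set_pmf[of ?M ?A] sp by simp
  also have "\<dots> = (\<Sum>x\<in>?A \<inter> {..k}. pmf ?M x)"
    by (rule measure_measure_pmf_finite) auto
  also have "\<dots> \<le> (\<Sum>x\<in>{..k}. pmf ?M x * exp (t * (real x - k * p) - u))"
  proof -
    have "(\<Sum>x\<in>?A \<inter> {..k}. pmf ?M x) \<le> (\<Sum>x\<in>?A \<inter> {..k}. pmf ?M x * exp (t * (real x - k * p) - u))"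
    proof (intro sum_mono)
      fix x assume "x \<in> ?A \<inter> {..k}"
      hence "1 \<le> exp (t * (real x - k * p) - u)" by simp
      thus "pmf ?M x \<le> pmf ?M x * exp (t * (real x - k * p) - u)"
        using mult_left_mono[of 1 _ "pmf ?M x"] by simp
    qed
    also have "\<dots> \<le> (\<Sum>x\<in>{..k}. pmf ?M x * exp (t * (real x - k * p) - u))"
      by (intro sum_mono2) auto
    finally show ?thesis .
  qed
  also have "\<dots> = exp (- t * k * p - u) * (\<Sum>x\<le>k. real (k choose x) * (p * exp t) ^ x * (1 - p) ^ (k - x))"
    unfolding sum_distrib_left
  proof (intro sum.cong refl)
    fix x assume "x \<in> {..k}"
    have "exp (t * (real x - k * p) - u) = exp (- t * k * p - u) * exp t ^ x"
      by (simp add: exp_of_nat_mult[symmetric] flip: exp_add) (simp add: algebra_simps)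
    thus "pmf ?M x * exp (t * (real x - k * p) - u) =
        exp (- t * k * p - u) * (real (k choose x) * (p * exp t) ^ x * (1 - p) ^ (k - x))"
      using p by (simp add: pmf_binomial power_mult_distrib)
  qed
  also have "(\<Sum>x\<le>k. real (k choose x) * (p * exp t) ^ x * (1 - p) ^ (k - x)) = (p * exp t + (1 - p)) ^ k"
    by (simp add: binomial_ring)
  also have "\<dots> \<le> exp (t * p + t\<^sup>2 * p * (1 - p)) ^ k"
    using p t by (intro power_mono mgf_factor) auto
  also have "\<dots> = exp (k * (t * p + t\<^sup>2 * p * (1 - p)))"
    by (simp add: exp_of_nat_mult)
  finally have "measure_pmf.prob ?M ?A \<le> exp (- t * k * p - u) * exp (k * (t * p + t\<^sup>2 * p * (1 - p)))"
    by (simp add: mult_left_mono)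
  also have "\<dots> = exp (- u + k * t\<^sup>2 * p * (1 - p))"
    by (simp add: algebra_simps flip: exp_add)
  finally show ?thesis .
qed


lemma binom_two_sided:
  fixes p L :: real assumes p: "0 < p" "p < 1" and k: "k > 0" and L: "0 \<le> L"
    and a: "L \<le> k * p * (1 - p)"
  shows "measure_pmf.prob (binomial_pmf k p) {x. (real x - k * p)\<^sup>2 > 4 * (k * p * (1 - p)) * L}
           \<le> 2 * exp (- L)"
proof -
  define a where "a = k * p * (1 - p)"
  have apos: "a > 0" using p k by (simp add: a_def)
  define t where "t = sqrt (L / a)"
  have La: "L / a \<ge> 0" using apos L by simp
  have t0: "t \<ge> 0" using La by (simp add: t_def)
  have "L / a \<le> 1" using a apos by (simp add: a_def)
  hence t1: "t \<le> 1" unfolding t_def by simp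
  have t2: "t\<^sup>2 = L / a" unfolding t_def using La by simp
  have "k * t\<^sup>2 * p * (1 - p) = a * t\<^sup>2" by (simp add: a_def algebra_simps)
  hence tt: "k * t\<^sup>2 * p * (1 - p) = L" using t2 apos by simp
  have ts: "t * sqrt (4 * a * L) = 2 * L"
  proof -
    have "t * sqrt (4 * a * L) = sqrt ((L / a) * (4 * a * L))" unfolding t_def by (rule real_sqrt_mult[symmetric])
    also have "(L / a) * (4 * a * L) = (2 * L)\<^sup>2" using apos by (simp add: power2_eq_square field_simps)
    also have "sqrt ((2 * L)\<^sup>2) = 2 * L" using L by (simp only: real_sqrt_abs)
    finally show ?thesis .
  qed
  let ?M = "binomial_pmf k p"
  have sub: "{x. (real x - k * p)\<^sup>2 > 4 * a * L} \<subseteq>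
      {x. t * (real x - k * p) \<ge> 2 * L} \<union> {x. (-t) * (real x - k * p) \<ge> 2 * L}"
  proof
    fix x assume "x \<in> {x. (real x - k * p)\<^sup>2 > 4 * a * L}"
    hence "sqrt (4 * a * L) < sqrt ((real x - k * p)\<^sup>2)" by (simp only: mem_Collect_eq real_sqrt_less_iff)
    hence "sqrt (4 * a * L) \<le> \<bar>real x - k * p\<bar>" by simp
    hence "t * sqrt (4 * a * L) \<le> t * \<bar>real x - k * p\<bar>" using t0 by (rule mult_left_mono)
    hence "2 * L \<le> t * \<bar>real x - k * p\<bar>" using ts by simp
    thus "x \<in> {x. t * (real x - k * p) \<ge> 2 * L} \<union> {x. (-t) * (real x - k * p) \<ge> 2 * L}"
      by (cases "real x - k * p \<ge> 0") (auto simp: algebra_simps)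
  qed
  have "measure_pmf.prob ?M {x. (real x - k * p)\<^sup>2 > 4 * a * L} \<le>
        measure_pmf.prob ?M ({x. t * (real x - k * p) \<ge> 2 * L} \<union> {x. (-t) * (real x - k * p) \<ge> 2 * L})"
    by (rule measure_pmf.finite_measure_mono[OF sub]) simp
  also have "\<dots> \<le> measure_pmf.prob ?M {x. t * (real x - k * p) \<ge> 2 * L} +
                  measure_pmf.prob ?M {x. (-t) * (real x - k * p) \<ge> 2 * L}"
    by (rule measure_Un_le) auto
  also have "\<dots> \<le> exp (- (2 * L) + k * t\<^sup>2 * p * (1 - p)) + exp (- (2 * L) + k * (-t)\<^sup>2 * p * (1 - p))"
    using t0 t1 p by (intro add_mono binom_tail) auto
  also have "\<dots> = 2 * exp (- L)" using tt by simp
  finally show ?thesis by (simp add: a_def)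
qed

lemma comparisons_component:
  assumes "finite E" "e \<in> E"
  shows "measure_pmf.prob (comparisons E w k) {X. Q (X e)} =
         measure_pmf.prob (binomial_pmf k (w (fst e) / (w (fst e) + w (snd e)))) {x. Q x}"
proof -
  have "measure_pmf.prob (comparisons E w k) {X. Q (X e)} =
        measure_pmf.prob (map_pmf (\<lambda>X. X e) (comparisons E w k)) {x. Q x}"
    by (simp add: measure_map_pmf vimage_def)
  also have "map_pmf (\<lambda>X. X e) (comparisons E w k) = binomial_pmf k (w (fst e) / (w (fst e) + w (snd e)))"
    unfolding comparisons_def using assms by (simp add: Pi_pmf_component)
  finally show ?thesis .
qed

lemma union_good:
  fixes M :: "'a pmf" and \<beta> :: real
  assumes "finite E" "\<And>e. e \<in> E \<Longrightarrow> measure_pmf.prob M {X. \<not> G e X} \<le> \<beta>"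
  shows "measure_pmf.prob M {X. \<forall>e\<in>E. G e X} \<ge> 1 - card E * \<beta>"
proof -
  have "measure_pmf.prob M (\<Union>e\<in>E. {X. \<not> G e X}) \<le> (\<Sum>e\<in>E. measure_pmf.prob M {X. \<not> G e X})"
    by (rule measure_pmf.finite_measure_subadditive_finite) (use assms in auto)
  also have "\<dots> \<le> (\<Sum>e\<in>E. \<beta>)" by (rule sum_mono) (rule assms(2))
  finally have b: "measure_pmf.prob M (\<Union>e\<in>E. {X. \<not> G e X}) \<le> card E * \<beta>" by simp
  have "{X. \<forall>e\<in>E. G e X} = UNIV - (\<Union>e\<in>E. {X. \<not> G e X})" by auto
  hence "measure_pmf.prob M {X. \<forall>e\<in>E. G e X} = 1 - measure_pmf.prob M (\<Union>e\<in>E. {X. \<not> G e X})"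
    using measure_pmf.prob_compl[of "\<Union>e\<in>E. {X. \<not> G e X}" M] by simp
  thus ?thesis using b by simp
qed

definition logit_rem :: "real \<Rightarrow> real \<Rightarrow> real" where
  "logit_rem p y = ln y - ln (1 - y) - ln (p / (1 - p)) - (1 / (p * (1 - p))) * (y - p)"

lemma logit_rem_deriv:
  assumes "0 < y" "y < 1" "0 < p" "p < 1"
  shows "DERIV (logit_rem p) y :> 1 / y + 1 / (1 - y) - 1 / (p * (1 - p))"
  unfolding logit_rem_def using assms
  by (auto intro!: derivative_eq_intros)

lemma logit_rem_deriv_bound:
  fixes p z d :: real
  assumes p: "0 < p" "p < 1" and z: "p / 2 \<le> z" "(1 - p) / 2 \<le> 1 - z" "\<bar>z - p\<bar> \<le> d"
  shows "\<bar>1 / z + 1 / (1 - z) - 1 / (p * (1 - p))\<bar> \<le> 4 * d / (p\<^sup>2 * (1 - p)\<^sup>2)"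
proof -
  define q where "q = 1 - p"
  have q: "0 < q" "q < 1" using p by (auto simp: q_def)
  have z0: "0 < z" "z < 1" using z p by auto
  have eq: "1 / z + 1 / (1 - z) - 1 / (p * q) = (p - z) * (1 - p - z) / (z * (1 - z) * (p * q))"
    using z0 p q by (simp add: field_simps q_def)
  have zz: "z * (1 - z) \<ge> p * q / 4"
  proof -
    have "(p / 2) * (q / 2) \<le> z * (1 - z)" using z p q by (intro mult_mono) (auto simp: q_def)
    thus ?thesis by simp
  qed
  have "\<bar>(p - z) * (1 - p - z)\<bar> \<le> \<bar>p - z\<bar> * 1"
    unfolding abs_mult using z0 p by (intro mult_left_mono) auto
  also have "\<dots> \<le> d" using z by simp
  finally have num: "\<bar>(p - z) * (1 - p - z)\<bar> \<le> d" .
  have pq: "p * q > 0" using p q by simp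
  have "\<bar>1 / z + 1 / (1 - z) - 1 / (p * q)\<bar> = \<bar>(p - z) * (1 - p - z)\<bar> / (z * (1 - z) * (p * q))"
    using eq z0 pq by (simp add: abs_div)
  also have "\<dots> \<le> d / (p * q / 4 * (p * q))"
    using num zz pq z0 p q by (intro frac_le mult_right_mono mult_pos_pos) auto
  also have "\<dots> = 4 * d / (p\<^sup>2 * q\<^sup>2)" using pq by (simp add: power2_eq_square field_simps)
  finally show ?thesis by (simp add: q_def)
qed

lemma logit_rem_bound:
  assumes p: "0 < p" "p < 1" and x: "\<bar>x - p\<bar> \<le> p / 2" "\<bar>x - p\<bar> \<le> (1 - p) / 2"
  shows "\<bar>logit_rem p x\<bar> \<le> 4 * (x - p)\<^sup>2 / (p\<^sup>2 * (1 - p)\<^sup>2)"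
proof -
  have h0: "logit_rem p p = 0" using p by (simp add: logit_rem_def ln_div)
  let ?D = "\<lambda>y. 1 / y + 1 / (1 - y) - 1 / (p * (1 - p))"
  have pp: "p\<^sup>2 * (1 - p)\<^sup>2 > 0" using p by simp
  consider "x < p" | "x = p" | "p < x" by linarith
  thus ?thesis
  proof cases
    case 2 thus ?thesis using h0 by simp
  next
    case 1
    have d: "DERIV (logit_rem p) y :> ?D y" if "x \<le> y" "y \<le> p" for y
      using x p that by (intro logit_rem_deriv) auto
    obtain z where z: "x < z" "z < p" "logit_rem p p - logit_rem p x = (p - x) * ?D z"
      using MVT2[OF 1 d] by blast
    have "\<bar>?D z\<bar> \<le> 4 * \<bar>x - p\<bar> / (p\<^sup>2 * (1 - p)\<^sup>2)"
      using z x p by (intro logit_rem_deriv_bound) auto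
    moreover have "\<bar>logit_rem p x\<bar> = \<bar>p - x\<bar> * \<bar>?D z\<bar>"
    proof -
      have "logit_rem p x = - ((p - x) * ?D z)" using z(3) h0 by simp
      thus ?thesis by (simp only: abs_minus_cancel abs_mult)
    qed
    ultimately have "\<bar>logit_rem p x\<bar> \<le> \<bar>p - x\<bar> * (4 * \<bar>x - p\<bar> / (p\<^sup>2 * (1 - p)\<^sup>2))"
      by (metis abs_ge_zero mult_left_mono)
    also have "\<dots> = 4 * (x - p)\<^sup>2 / (p\<^sup>2 * (1 - p)\<^sup>2)"
      by (simp only: abs_minus_commute[of p x]) (simp add: abs_mult_self power2_eq_square)
    finally show ?thesis .
  next
    case 3
    have d: "DERIV (logit_rem p) y :> ?D y" if "p \<le> y" "y \<le> x" for y
      using x p that by (intro logit_rem_deriv) auto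
    obtain z where z: "p < z" "z < x" "logit_rem p x - logit_rem p p = (x - p) * ?D z"
      using MVT2[OF 3 d] by blast
    have "\<bar>?D z\<bar> \<le> 4 * \<bar>x - p\<bar> / (p\<^sup>2 * (1 - p)\<^sup>2)"
      using z x p by (intro logit_rem_deriv_bound) auto
    moreover have "\<bar>logit_rem p x\<bar> = \<bar>x - p\<bar> * \<bar>?D z\<bar>"
      using z(3) h0 by (simp add: abs_mult[symmetric])
    ultimately have "\<bar>logit_rem p x\<bar> \<le> \<bar>x - p\<bar> * (4 * \<bar>x - p\<bar> / (p\<^sup>2 * (1 - p)\<^sup>2))"
      by (metis abs_ge_zero mult_left_mono)
    also have "\<dots> = 4 * (x - p)\<^sup>2 / (p\<^sup>2 * (1 - p)\<^sup>2)"
      by (simp add: power2_eq_square abs_mult_self)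
    finally show ?thesis .
  qed
qed

lemma sum_verts_shift: "(\<Sum>u\<in>verts n. f u) = (\<Sum>b<n. f (Suc b))"
  unfolding verts_def using sum.atLeast1_atMost_eq[of f n] by simp

lemma inv_exists:
  fixes M :: "nat \<Rightarrow> nat \<Rightarrow> real"
  assumes inj: "\<And>x. \<forall>u\<in>verts n. (\<Sum>v\<in>verts n. M u v * x v) = 0 \<Longrightarrow> \<forall>u\<in>verts n. x u = 0"
  shows "\<exists>Y. \<forall>i\<in>verts n. \<forall>j\<in>verts n.
           mmul n M Y i j = (if i = j then 1 else 0) \<and> mmul n Y M i j = (if i = j then 1 else 0)"
proof -
  define A where "A = mat n n (\<lambda>(a,b). M (Suc a) (Suc b))"
  have A: "A \<in> carrier_mat n n" by (simp add: A_def)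
  have "det A \<noteq> 0"
  proof
    assume "det A = 0"
    then obtain v where v: "v \<in> carrier_vec n" "v \<noteq> 0\<^sub>v n" "A *\<^sub>v v = 0\<^sub>v n"
      using det_0_iff_vec_prod_zero_field[OF A] by blast
    define x where "x u = (if 1 \<le> u \<and> u \<le> n then v $ (u - 1) else 0)" for u
    have "\<forall>u\<in>verts n. (\<Sum>w\<in>verts n. M u w * x w) = 0"
    proof
      fix u assume u: "u \<in> verts n"
      hence u': "u - 1 < n" "Suc (u - 1) = u" by (auto simp: verts_def)
      have "(\<Sum>w\<in>verts n. M u w * x w) = (\<Sum>b<n. M u (Suc b) * v $ b)"
        by (simp add: sum_verts_shift x_def)
      also have "\<dots> = (A *\<^sub>v v) $ (u - 1)"
        using u' v(1) A by (simp add: A_def mult_mat_vec_def scalar_prod_def row_def lessThan_atLeast0)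
      also have "\<dots> = 0" using v(3) u' by simp
      finally show "(\<Sum>w\<in>verts n. M u w * x w) = 0" .
    qed
    hence x0: "\<forall>u\<in>verts n. x u = 0" by (rule inj)
    have "v = 0\<^sub>v n"
    proof (rule eq_vecI)
      fix b assume "b < dim_vec (0\<^sub>v n :: real vec)"
      hence b: "b < n" by simp
      hence "Suc b \<in> verts n" by (simp add: verts_def)
      hence "x (Suc b) = 0" using x0 by blast
      thus "v $ b = 0\<^sub>v n $ b" using b by (simp add: x_def)
    qed (use v in simp)
    thus False using v(2) by simp
  qed
  hence "A \<in> Units (ring_mat TYPE(real) n ())" by (rule det_non_zero_imp_unit[OF A])
  then obtain B where B: "B \<in> carrier_mat n n" "B * A = 1\<^sub>m n" "A * B = 1\<^sub>m n"
    unfolding Units_def ring_mat_def by auto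
  define Y where "Y i j = B $$ (i - 1, j - 1)" for i j
  have idx: "i \<in> verts n \<Longrightarrow> i - 1 < n \<and> Suc (i - 1) = i" for i by (auto simp: verts_def)
  show ?thesis
  proof (intro exI ballI conjI)
    fix i j assume i: "i \<in> verts n" and j: "j \<in> verts n"
    have "mmul n M Y i j = (\<Sum>b<n. A $$ (i - 1, b) * B $$ (b, j - 1))"
      unfolding mmul_def sum_verts_shift using idx[OF i] idx[OF j] by (simp add: A_def Y_def)
    also have "\<dots> = (A * B) $$ (i - 1, j - 1)"
      using idx[OF i] idx[OF j] A B(1) by (simp add: scalar_prod_def row_def col_def lessThan_atLeast0)
    also have "\<dots> = (if i = j then 1 else 0)"
      using B(3) idx[OF i] idx[OF j] by (auto simp: verts_def)
    finally show "mmul n M Y i j = (if i = j then 1 else 0)" .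
    have "mmul n Y M i j = (\<Sum>b<n. B $$ (i - 1, b) * A $$ (b, j - 1))"
      unfolding mmul_def sum_verts_shift using idx[OF i] idx[OF j] by (simp add: A_def Y_def)
    also have "\<dots> = (B * A) $$ (i - 1, j - 1)"
      using idx[OF i] idx[OF j] A B(1) by (simp add: scalar_prod_def row_def col_def lessThan_atLeast0)
    also have "\<dots> = (if i = j then 1 else 0)"
      using B(2) idx[OF i] idx[OF j] by (auto simp: verts_def)
    finally show "mmul n Y M i j = (if i = j then 1 else 0)" .
  qed
qed

lemma finite_verts [simp]: "finite (verts n)" by (simp add: verts_def)
lemma card_verts [simp]: "card (verts n) = n" by (simp add: verts_def)


lemma mmul_assoc: "mmul n (mmul n A B) C i j = mmul n A (mmul n B C) i j"
  unfolding mmul_def sum_distrib_left sum_distrib_right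
  by (subst sum.swap) (simp add: mult_ac)

lemma mmul_cong:
  "(\<And>k. k \<in> verts n \<Longrightarrow> A i k = A' i k) \<Longrightarrow> (\<And>k. k \<in> verts n \<Longrightarrow> B k j = B' k j) \<Longrightarrow>
   mmul n A B i j = mmul n A' B' i j"
  unfolding mmul_def by (intro sum.cong refl) auto

definition eqV :: "nat \<Rightarrow> (nat \<Rightarrow> nat \<Rightarrow> real) \<Rightarrow> (nat \<Rightarrow> nat \<Rightarrow> real) \<Rightarrow> bool" where
  "eqV n A B \<longleftrightarrow> (\<forall>i\<in>verts n. \<forall>j\<in>verts n. A i j = B i j)"

definition symV :: "nat \<Rightarrow> (nat \<Rightarrow> nat \<Rightarrow> real) \<Rightarrow> bool" where
  "symV n A \<longleftrightarrow> (\<forall>i\<in>verts n. \<forall>j\<in>verts n. A i j = A j i)"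

lemma eqV_left: "eqV n A A' \<Longrightarrow> i \<in> verts n \<Longrightarrow> mmul n A B i j = mmul n A' B i j"
  by (rule mmul_cong) (auto simp: eqV_def)

lemma eqV_right: "eqV n B B' \<Longrightarrow> j \<in> verts n \<Longrightarrow> mmul n A B i j = mmul n A B' i j"
  by (rule mmul_cong) (auto simp: eqV_def)

lemma mmul_swap: "symV n A \<Longrightarrow> symV n B \<Longrightarrow> i \<in> verts n \<Longrightarrow> j \<in> verts n \<Longrightarrow>
    mmul n A B i j = mmul n B A j i"
  unfolding mmul_def symV_def by (intro sum.cong refl) (simp add: mult.commute)

definition Im :: "nat \<Rightarrow> nat \<Rightarrow> real" where "Im i j = (if i = j then 1 else 0)"

lemma Im_left: assumes "i \<in> verts n" shows "mmul n Im A i j = A i j"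
proof -
  have e: "(\<lambda>k. Im i k * A k j) = (\<lambda>k. if i = k then A k j else 0)" by (auto simp: Im_def)
  show ?thesis unfolding mmul_def e using assms by simp
qed

lemma Im_right: assumes "j \<in> verts n" shows "mmul n A Im i j = A i j"
proof -
  have e: "(\<lambda>k. A i k * Im k j) = (\<lambda>k. if k = j then A i k else 0)" by (auto simp: Im_def)
  show ?thesis unfolding mmul_def e using assms by simp
qed

definition Pm :: "nat \<Rightarrow> nat \<Rightarrow> nat \<Rightarrow> real" where "Pm n i j = Im i j - 1 / n"

lemma Pm_left: "i \<in> verts n \<Longrightarrow> mmul n (Pm n) A i j = A i j - (\<Sum>k\<in>verts n. A k j) / n"
proof -
  assume i: "i \<in> verts n"
  have "mmul n (Pm n) A i j = mmul n Im A i j - (\<Sum>k\<in>verts n. A k j) / n"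
    unfolding mmul_def Pm_def by (simp add: left_diff_distrib sum_subtractf sum_divide_distrib)
  thus ?thesis using Im_left[OF i] by simp
qed

lemma Pm_right: "j \<in> verts n \<Longrightarrow> mmul n A (Pm n) i j = A i j - (\<Sum>k\<in>verts n. A i k) / n"
proof -
  assume j: "j \<in> verts n"
  have "mmul n A (Pm n) i j = mmul n A Im i j - (\<Sum>k\<in>verts n. A i k) / n"
    unfolding mmul_def Pm_def by (simp add: right_diff_distrib sum_subtractf sum_divide_distrib)
  thus ?thesis using Im_right[OF j] by simp
qed

lemma Pm_sym: "symV n (Pm n)" by (simp add: symV_def Pm_def Im_def)

locale ograph =
  fixes n :: nat and E :: "(nat \<times> nat) set"
  assumes osg: "oriented_simple_graph n E" and conn: "graph_connected n E" and n1: "n \<ge> 1"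
begin

abbreviation V where "V \<equiv> verts n"
abbreviation Lap where "Lap \<equiv> laplacian E"

lemma E_sub: "E \<subseteq> V \<times> V" using osg by (simp add: oriented_simple_graph_def)
lemma finE [simp]: "finite E" using E_sub by (rule finite_subset) simp
lemma edge_ends: "e \<in> E \<Longrightarrow> fst e \<in> V \<and> snd e \<in> V \<and> fst e \<noteq> snd e"
  using osg by (auto simp: oriented_simple_graph_def)

definition D :: "(nat \<Rightarrow> real) \<Rightarrow> nat \<times> nat \<Rightarrow> real" where
  "D x e = x (fst e) - x (snd e)"

lemma inc_sum: "e \<in> E \<Longrightarrow> (\<Sum>u\<in>V. incidence E u e * x u) = D x e"
proof -
  assume e: "e \<in> E"
  have "incidence E u e * x u = (if u = fst e then x u else 0) - (if u = snd e then x u else 0)" for u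
    using edge_ends[OF e] e by (auto simp: incidence_def)
  hence "(\<Sum>u\<in>V. incidence E u e * x u) = (\<Sum>u\<in>V. (if u = fst e then x u else 0)) - (\<Sum>u\<in>V. (if u = snd e then x u else 0))"
    by (simp add: sum_subtractf)
  also have "\<dots> = D x e" using edge_ends[OF e] by (simp add: D_def)
  finally show ?thesis .
qed

lemma Lap_apply: "(\<Sum>v\<in>V. Lap u v * x v) = (\<Sum>e\<in>E. incidence E u e * D x e)"
proof -
  have "(\<Sum>v\<in>V. Lap u v * x v) = (\<Sum>e\<in>E. incidence E u e * (\<Sum>v\<in>V. incidence E v e * x v))"
    unfolding laplacian_def sum_distrib_right sum_distrib_left
    by (subst sum.swap) (simp add: mult_ac)
  also have "\<dots> = (\<Sum>e\<in>E. incidence E u e * D x e)" by (intro sum.cong refl) (simp add: inc_sum)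
  finally show ?thesis .
qed

lemma Lap_sym: "Lap u v = Lap v u" by (simp add: laplacian_def mult.commute)

lemma Lap_rowsum: "(\<Sum>v\<in>V. Lap u v) = 0"
  using Lap_apply[of u "\<lambda>_. 1"] by (simp add: D_def)

lemma Lap_colsum: "(\<Sum>u\<in>V. Lap u v) = 0"
  using Lap_rowsum[of v] by (simp add: Lap_sym)

lemma quad: "(\<Sum>u\<in>V. x u * (\<Sum>v\<in>V. Lap u v * x v)) = (\<Sum>e\<in>E. (D x e)\<^sup>2)"
proof -
  have "(\<Sum>u\<in>V. x u * (\<Sum>v\<in>V. Lap u v * x v)) = (\<Sum>u\<in>V. \<Sum>e\<in>E. x u * incidence E u e * D x e)"
    unfolding Lap_apply by (simp add: sum_distrib_left mult_ac)
  also have "\<dots> = (\<Sum>e\<in>E. D x e * (\<Sum>u\<in>V. incidence E u e * x u))"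
    by (subst sum.swap) (simp add: sum_distrib_left mult_ac)
  also have "\<dots> = (\<Sum>e\<in>E. (D x e)\<^sup>2)" by (intro sum.cong refl) (simp add: inc_sum power2_eq_square)
  finally show ?thesis .
qed

lemma const_on_V:
  assumes "\<And>e. e \<in> E \<Longrightarrow> x (fst e) = x (snd e)" "u \<in> V" "v \<in> V"
  shows "x u = x v"
proof -
  have "(u, v) \<in> {(a, b). adj E a b}\<^sup>*" using conn assms(2,3) by (simp add: graph_connected_def)
  thus ?thesis
  proof (induction rule: rtrancl_induct)
    case base thus ?case by simp
  next
    case (step y z)
    hence "adj E y z" by simp
    hence "x y = x z" using assms(1)[of "(y,z)"] assms(1)[of "(z,y)"] by (auto simp: adj_def)
    thus ?case using step.IH by simp
  qed
qed

definition Mm :: "nat \<Rightarrow> nat \<Rightarrow> real" where "Mm u v = Lap u v + 1 / n"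

lemma Mm_inj:
  assumes "\<forall>u\<in>V. (\<Sum>v\<in>V. Mm u v * x v) = 0" shows "\<forall>u\<in>V. x u = 0"
proof -
  have n0: "real n > 0" using n1 by simp
  have Mx: "(\<Sum>v\<in>V. Mm u v * x v) = (\<Sum>v\<in>V. Lap u v * x v) + (\<Sum>v\<in>V. x v) / n" for u
    by (simp add: Mm_def algebra_simps sum.distrib sum_divide_distrib)
  have "(\<Sum>u\<in>V. \<Sum>v\<in>V. Mm u v * x v) = 0" using assms by simp
  moreover have "(\<Sum>u\<in>V. \<Sum>v\<in>V. Mm u v * x v) = (\<Sum>v\<in>V. x v)"
  proof -
    have "(\<Sum>u\<in>V. \<Sum>v\<in>V. Mm u v * x v) = (\<Sum>v\<in>V. x v * (\<Sum>u\<in>V. Mm u v))"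
      by (subst sum.swap) (simp add: sum_distrib_left mult_ac)
    also have "\<dots> = (\<Sum>v\<in>V. x v)"
      using n0 by (simp add: Mm_def sum.distrib Lap_colsum)
    finally show ?thesis .
  qed
  ultimately have s0: "(\<Sum>v\<in>V. x v) = 0" by simp
  have Lx: "(\<Sum>v\<in>V. Lap u v * x v) = 0" if "u \<in> V" for u using assms that Mx[of u] s0 by simp
  have "(\<Sum>e\<in>E. (D x e)\<^sup>2) = 0" using quad[of x] Lx by simp
  hence "\<forall>e\<in>E. (D x e)\<^sup>2 = 0" by (subst (asm) sum_nonneg_eq_0_iff) auto
  hence eq: "\<And>e. e \<in> E \<Longrightarrow> x (fst e) = x (snd e)" by (simp add: D_def)
  have one: "1 \<in> V" using n1 by (simp add: verts_def)
  have "\<forall>v\<in>V. x v = x 1" using const_on_V[OF eq _ one] by blast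
  hence "(\<Sum>v\<in>V. x v) = n * x 1" by simp
  hence "x 1 = 0" using s0 n0 by simp
  thus ?thesis using \<open>\<forall>v\<in>V. x v = x 1\<close> by simp
qed


lemma Mm_sym: "Mm u v = Mm v u" by (simp add: Mm_def Lap_sym)

lemma Mm_colsum: "(\<Sum>u\<in>V. Mm u v) = 1"
  using n1 by (simp add: Mm_def sum.distrib Lap_colsum)

lemma Mm_rowsum: "(\<Sum>v\<in>V. Mm u v) = 1"
  using n1 by (simp add: Mm_def sum.distrib Lap_rowsum)

definition Yinv :: "nat \<Rightarrow> nat \<Rightarrow> real" where
  "Yinv = (SOME Y. \<forall>i\<in>V. \<forall>j\<in>V. mmul n Mm Y i j = Im i j \<and> mmul n Y Mm i j = Im i j)"

lemma Yinv: "i \<in> V \<Longrightarrow> j \<in> V \<Longrightarrow> mmul n Mm Yinv i j = Im i j \<and> mmul n Yinv Mm i j = Im i j"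
proof -
  have "\<exists>Y. \<forall>i\<in>V. \<forall>j\<in>V. mmul n Mm Y i j = Im i j \<and> mmul n Y Mm i j = Im i j"
    using inv_exists[of n Mm, OF Mm_inj] by (simp add: Im_def)
  from someI_ex[OF this] show "i \<in> V \<Longrightarrow> j \<in> V \<Longrightarrow> ?thesis" unfolding Yinv_def by blast
qed

lemma Y_colsum: "j \<in> V \<Longrightarrow> (\<Sum>k\<in>V. Yinv k j) = 1"
proof -
  assume j: "j \<in> V"
  have "(\<Sum>i\<in>V. mmul n Mm Yinv i j) = (\<Sum>i\<in>V. Im i j)" using Yinv[OF _ j] by simp
  also have "\<dots> = 1" using j by (simp add: Im_def)
  also have "(\<Sum>i\<in>V. mmul n Mm Yinv i j) = (\<Sum>k\<in>V. Yinv k j * (\<Sum>i\<in>V. Mm i k))"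
    unfolding mmul_def by (subst sum.swap) (simp add: sum_distrib_left mult_ac)
  also have "\<dots> = (\<Sum>k\<in>V. Yinv k j)" by (simp add: Mm_colsum)
  finally show ?thesis .
qed

lemma Y_rowsum: "i \<in> V \<Longrightarrow> (\<Sum>k\<in>V. Yinv i k) = 1"
proof -
  assume i: "i \<in> V"
  have "(\<Sum>j\<in>V. mmul n Yinv Mm i j) = (\<Sum>j\<in>V. Im i j)" using Yinv[OF i] by simp
  also have "\<dots> = 1" using i by (simp add: Im_def)
  also have "(\<Sum>j\<in>V. mmul n Yinv Mm i j) = (\<Sum>k\<in>V. Yinv i k * (\<Sum>j\<in>V. Mm k j))"
    unfolding mmul_def by (subst sum.swap) (simp add: sum_distrib_left mult_ac)
  also have "\<dots> = (\<Sum>k\<in>V. Yinv i k)" by (simp add: Mm_rowsum)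
  finally show ?thesis .
qed

lemma Y_sym: "i \<in> V \<Longrightarrow> j \<in> V \<Longrightarrow> Yinv i j = Yinv j i"
proof -
  assume i: "i \<in> V" and j: "j \<in> V"
  define Z where "Z = mtrans Yinv"
  have MZ: "mmul n Mm Z a b = Im a b" if "a \<in> V" "b \<in> V" for a b
  proof -
    have "mmul n Mm Z a b = mmul n Yinv Mm b a"
      unfolding mmul_def Z_def mtrans_def by (intro sum.cong refl) (simp add: Mm_sym mult.commute)
    also have "\<dots> = Im b a" using Yinv[OF that(2,1)] by simp
    finally show ?thesis by (simp add: Im_def)
  qed
  have "Z i j = mmul n Im Z i j" using Im_left[OF i] by simp
  also have "\<dots> = mmul n (mmul n Yinv Mm) Z i j"
    using Yinv[OF i] by (intro mmul_cong) auto
  also have "\<dots> = mmul n Yinv (mmul n Mm Z) i j" by (rule mmul_assoc)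
  also have "\<dots> = mmul n Yinv Im i j" using MZ j by (intro mmul_cong) auto
  also have "\<dots> = Yinv i j" using Im_right[OF j] by simp
  finally show ?thesis by (simp add: Z_def mtrans_def)
qed

definition X0 :: "nat \<Rightarrow> nat \<Rightarrow> real" where
  "X0 i j = (if i \<in> V \<and> j \<in> V then Yinv i j - 1 / n else 0)"

lemma X0_sym: "X0 i j = X0 j i" by (auto simp: X0_def Y_sym)

lemma LX0: "i \<in> V \<Longrightarrow> j \<in> V \<Longrightarrow> mmul n Lap X0 i j = Pm n i j"
proof -
  assume i: "i \<in> V" and j: "j \<in> V"
  have "mmul n Lap X0 i j = (\<Sum>k\<in>V. Lap i k * Yinv k j) - (\<Sum>k\<in>V. Lap i k) / n"
    unfolding mmul_def X0_def using j by (simp add: right_diff_distrib sum_subtractf sum_divide_distrib)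
  also have "\<dots> = (\<Sum>k\<in>V. Lap i k * Yinv k j)" by (simp add: Lap_rowsum)
  also have "\<dots> = mmul n Mm Yinv i j - (\<Sum>k\<in>V. Yinv k j) / n"
    unfolding mmul_def Mm_def by (simp add: distrib_right sum.distrib sum_divide_distrib)
  also have "\<dots> = Pm n i j" using Yinv[OF i j] Y_colsum[OF j] by (simp add: Pm_def)
  finally show ?thesis .
qed

lemma X0L: "i \<in> V \<Longrightarrow> j \<in> V \<Longrightarrow> mmul n X0 Lap i j = Pm n i j"
proof -
  assume i: "i \<in> V" and j: "j \<in> V"
  have "mmul n X0 Lap i j = (\<Sum>k\<in>V. Yinv i k * Lap k j) - (\<Sum>k\<in>V. Lap k j) / n"
    unfolding mmul_def X0_def using i by (simp add: left_diff_distrib sum_subtractf sum_divide_distrib)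
  also have "\<dots> = (\<Sum>k\<in>V. Yinv i k * Lap k j)" by (simp add: Lap_colsum)
  also have "\<dots> = mmul n Yinv Mm i j - (\<Sum>k\<in>V. Yinv i k) / n"
    unfolding mmul_def Mm_def by (simp add: distrib_left sum.distrib sum_divide_distrib)
  also have "\<dots> = Pm n i j" using Yinv[OF i j] Y_rowsum[OF i] by (simp add: Pm_def)
  finally show ?thesis .
qed

lemma X0_colsum: "j \<in> V \<Longrightarrow> (\<Sum>k\<in>V. X0 k j) = 0"
  using Y_colsum[of j] n1 by (simp add: X0_def sum_subtractf)

lemma X0_rowsum: "i \<in> V \<Longrightarrow> (\<Sum>k\<in>V. X0 i k) = 0"
  using Y_rowsum[of i] n1 by (simp add: X0_def sum_subtractf)

lemma eqV_LX0: "eqV n (mmul n Lap X0) (Pm n)" by (simp add: eqV_def LX0)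
lemma eqV_X0L: "eqV n (mmul n X0 Lap) (Pm n)" by (simp add: eqV_def X0L)

lemma is_pinv_X0: "is_pinv n Lap X0"
  unfolding is_pinv_def
proof (intro conjI allI impI ballI)
  fix i j :: nat assume "i \<notin> V \<or> j \<notin> V" thus "X0 i j = 0" by (auto simp: X0_def)
next
  fix i j assume i: "i \<in> V" and j: "j \<in> V"
  show "mmul n (mmul n Lap X0) Lap i j = Lap i j"
    using eqV_left[OF eqV_LX0 i] Pm_left[OF i] by (simp add: Lap_colsum)
  show "mmul n (mmul n X0 Lap) X0 i j = X0 i j"
    using eqV_left[OF eqV_X0L i] Pm_left[OF i] by (simp add: X0_colsum[OF j])
  show "mtrans (mmul n Lap X0) i j = mmul n Lap X0 i j"
    using i j by (simp add: mtrans_def LX0 Pm_def Im_def)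
  show "mtrans (mmul n X0 Lap) i j = mmul n X0 Lap i j"
    using i j by (simp add: mtrans_def X0L Pm_def Im_def)
qed

lemma pinv_unique:
  assumes Z: "is_pinv n Lap Z" shows "Z = X0"
proof -
  have Z0: "Z i j = 0" if "i \<notin> V \<or> j \<notin> V" for i j using Z that by (simp add: is_pinv_def)
  have ZLZ: "mmul n (mmul n Z Lap) Z i j = Z i j" if "i \<in> V" "j \<in> V" for i j
    using Z that by (simp add: is_pinv_def)
  have LZL: "mmul n (mmul n Lap Z) Lap i j = Lap i j" if "i \<in> V" "j \<in> V" for i j
    using Z that by (simp add: is_pinv_def)
  have Qs: "symV n (mmul n Lap Z)" using Z by (auto simp: is_pinv_def symV_def mtrans_def)
  have Rs: "symV n (mmul n Z Lap)" using Z by (auto simp: is_pinv_def symV_def mtrans_def)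
  have QP: "mmul n (mmul n Lap Z) (Pm n) i j = Pm n i j" if i: "i \<in> V" and j: "j \<in> V" for i j
  proof -
    have "mmul n (mmul n Lap Z) (Pm n) i j = mmul n (mmul n Lap Z) (mmul n Lap X0) i j"
      using eqV_right[OF eqV_LX0 j] by simp
    also have "\<dots> = mmul n (mmul n (mmul n Lap Z) Lap) X0 i j" by (simp add: mmul_assoc)
    also have "\<dots> = mmul n Lap X0 i j" using LZL i by (intro mmul_cong) auto
    also have "\<dots> = Pm n i j" using LX0 i j by simp
    finally show ?thesis .
  qed
  have Qeq: "eqV n (mmul n Lap Z) (Pm n)"
    unfolding eqV_def
  proof (intro ballI)
    fix i j assume i: "i \<in> V" and j: "j \<in> V"
    have cs: "(\<Sum>k\<in>V. mmul n Lap Z k j) = 0"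
      unfolding mmul_def by (subst sum.swap) (simp add: sum_distrib_right[symmetric] Lap_colsum)
    have "mmul n Lap Z i j = mmul n (Pm n) (mmul n Lap Z) i j" using Pm_left[OF i] cs by simp
    also have "\<dots> = mmul n (mmul n Lap Z) (Pm n) j i" by (rule mmul_swap[OF Pm_sym Qs i j])
    also have "\<dots> = Pm n i j" using QP[OF j i] Pm_sym i j by (simp add: symV_def)
    finally show "mmul n Lap Z i j = Pm n i j" .
  qed
  have PR: "mmul n (Pm n) (mmul n Z Lap) i j = Pm n i j" if i: "i \<in> V" and j: "j \<in> V" for i j
  proof -
    have "mmul n (Pm n) (mmul n Z Lap) i j = mmul n (mmul n X0 Lap) (mmul n Z Lap) i j"
      using eqV_left[OF eqV_X0L i] by simp
    also have "\<dots> = mmul n X0 (mmul n Lap (mmul n Z Lap)) i j" by (simp add: mmul_assoc)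
    also have "\<dots> = mmul n X0 Lap i j"
      using LZL j by (intro mmul_cong) (auto simp: mmul_assoc[symmetric])
    also have "\<dots> = Pm n i j" using X0L i j by simp
    finally show ?thesis .
  qed
  have Req: "eqV n (mmul n Z Lap) (Pm n)"
    unfolding eqV_def
  proof (intro ballI)
    fix i j assume i: "i \<in> V" and j: "j \<in> V"
    have rs: "(\<Sum>k\<in>V. mmul n Z Lap i k) = 0"
      unfolding mmul_def by (subst sum.swap) (simp add: sum_distrib_left[symmetric] Lap_rowsum)
    have "mmul n Z Lap i j = mmul n (mmul n Z Lap) (Pm n) i j" using Pm_right[OF j] rs by simp
    also have "\<dots> = mmul n (Pm n) (mmul n Z Lap) j i" by (rule mmul_swap[OF Rs Pm_sym i j])
    also have "\<dots> = Pm n i j" using PR[OF j i] Pm_sym i j by (simp add: symV_def)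
    finally show "mmul n Z Lap i j = Pm n i j" .
  qed
  show ?thesis
  proof (intro ext)
    fix i j
    show "Z i j = X0 i j"
    proof (cases "i \<in> V \<and> j \<in> V")
      case False thus ?thesis using Z0 by (auto simp: X0_def)
    next
      case True
      hence i: "i \<in> V" and j: "j \<in> V" by auto
      have "Z i j = mmul n (mmul n Z Lap) Z i j" using ZLZ i j by simp
      also have "\<dots> = mmul n Z (mmul n Lap Z) i j" by (rule mmul_assoc)
      also have "\<dots> = mmul n Z (Pm n) i j" using eqV_right[OF Qeq j] by simp
      also have "\<dots> = mmul n Z (mmul n Lap X0) i j" using eqV_right[OF eqV_LX0 j] by simp
      also have "\<dots> = mmul n (mmul n Z Lap) X0 i j" by (simp add: mmul_assoc)
      also have "\<dots> = mmul n (Pm n) X0 i j" using eqV_left[OF Req i] by simp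
      also have "\<dots> = X0 i j" using Pm_left[OF i] X0_colsum[OF j] by simp
      finally show ?thesis .
    qed
  qed
qed

lemma pinv_eq: "pinv n Lap = X0"
  unfolding pinv_def
proof (rule the_equality)
  show "is_pinv n Lap X0" by (rule is_pinv_X0)
  fix Z assume "is_pinv n Lap Z" thus "Z = X0" by (rule pinv_unique)
qed


lemma ediff_sum: "i \<in> V \<Longrightarrow> j \<in> V \<Longrightarrow> (\<Sum>s\<in>V. ediff i j s * g s) = g i - g j"
proof -
  assume i: "i \<in> V" and j: "j \<in> V"
  have "ediff i j s * g s = (if s = i then g s else 0) - (if s = j then g s else 0)" for s
    by (auto simp: ediff_def)
  hence "(\<Sum>s\<in>V. ediff i j s * g s) = (\<Sum>s\<in>V. (if s = i then g s else 0)) - (\<Sum>s\<in>V. (if s = j then g s else 0))"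
    by (simp add: sum_subtractf)
  thus ?thesis using i j by simp
qed

lemma ediff_sum': "i \<in> V \<Longrightarrow> j \<in> V \<Longrightarrow> (\<Sum>s\<in>V. g s * ediff i j s) = g i - g j"
  using ediff_sum[of i j g] by (simp add: mult.commute)

definition phi :: "nat \<Rightarrow> nat \<Rightarrow> nat \<Rightarrow> real" where
  "phi i j u = X0 u i - X0 u j"

lemma L_phi: "i \<in> V \<Longrightarrow> j \<in> V \<Longrightarrow> u \<in> V \<Longrightarrow> (\<Sum>v\<in>V. Lap u v * phi i j v) = ediff i j u"
proof -
  assume i: "i \<in> V" and j: "j \<in> V" and u: "u \<in> V"
  have "(\<Sum>v\<in>V. Lap u v * phi i j v) = mmul n Lap X0 u i - mmul n Lap X0 u j"
    unfolding mmul_def phi_def by (simp add: right_diff_distrib sum_subtractf)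
  also have "\<dots> = ediff i j u" using i j u by (simp add: LX0 Pm_def Im_def ediff_def)
  finally show ?thesis .
qed

lemma eff_res_eq: "i \<in> V \<Longrightarrow> j \<in> V \<Longrightarrow> eff_res n E i j = (\<Sum>e\<in>E. (D (phi i j) e)\<^sup>2)"
proof -
  assume i: "i \<in> V" and j: "j \<in> V"
  have "eff_res n E i j = (\<Sum>s\<in>V. ediff i j s * (X0 s i - X0 s j))"
    unfolding eff_res_def pinv_eq
    by (intro sum.cong refl) (simp add: sum_distrib_left[symmetric] mult.assoc ediff_sum'[OF i j])
  also have "\<dots> = (\<Sum>s\<in>V. phi i j s * ediff i j s)" by (simp add: phi_def mult.commute)
  also have "\<dots> = (\<Sum>s\<in>V. phi i j s * (\<Sum>v\<in>V. Lap s v * phi i j v))"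
    using L_phi[OF i j] by simp
  also have "\<dots> = (\<Sum>e\<in>E. (D (phi i j) e)\<^sup>2)" by (rule quad)
  finally show ?thesis .
qed

lemma seminorm_eq:
  "i \<in> V \<Longrightarrow> j \<in> V \<Longrightarrow> pair_seminorm_sq n E i j x = (\<Sum>e\<in>E. x e * D (phi i j) e)\<^sup>2"
proof -
  assume i: "i \<in> V" and j: "j \<in> V"
  have M: "mmul n (mmul n X0 (Qmat i j)) X0 u v = phi i j u * phi i j v" if "u \<in> V" "v \<in> V" for u v
  proof -
    have a: "mmul n X0 (Qmat i j) u t = phi i j u * ediff i j t" for t
      unfolding mmul_def Qmat_def phi_def
      by (simp add: mult.assoc[symmetric] sum_distrib_right[symmetric] ediff_sum'[OF i j] )
    have "mmul n (mmul n X0 (Qmat i j)) X0 u v = phi i j u * (\<Sum>t\<in>V. ediff i j t * X0 t v)"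
      unfolding mmul_def[of n "mmul n X0 (Qmat i j)" X0] a by (simp add: sum_distrib_left mult_ac)
    also have "(\<Sum>t\<in>V. ediff i j t * X0 t v) = phi i j v"
      by (simp add: ediff_sum[OF i j] phi_def X0_sym)
    finally show ?thesis .
  qed
  have a: "(\<Sum>u\<in>V. Bvec E x u * phi i j u) = (\<Sum>e\<in>E. x e * D (phi i j) e)"
  proof -
    have "(\<Sum>u\<in>V. Bvec E x u * phi i j u) = (\<Sum>e\<in>E. x e * (\<Sum>u\<in>V. incidence E u e * phi i j u))"
      unfolding Bvec_def sum_distrib_right sum_distrib_left by (subst sum.swap) (simp add: mult_ac)
    thus ?thesis by (simp add: inc_sum)
  qed
  have "pair_seminorm_sq n E i j x = (\<Sum>u\<in>V. \<Sum>v\<in>V. (Bvec E x u * phi i j u) * (Bvec E x v * phi i j v))"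
    unfolding pair_seminorm_sq_def pinv_eq Let_def
    by (intro sum.cong refl) (simp add: M mult_ac)
  also have "\<dots> = (\<Sum>u\<in>V. Bvec E x u * phi i j u)\<^sup>2"
    by (simp add: power2_eq_square sum_product)
  finally show ?thesis using a by simp
qed


lemma adj_V: "adj E x z \<Longrightarrow> z \<in> V \<and> x \<in> V" using E_sub by (auto simp: adj_def)

lemma adj_sym: "adj E x z \<Longrightarrow> adj E z x" by (auto simp: adj_def)

lemma net_term: "e \<in> E \<Longrightarrow> incidence E x e * D \<psi> e =
   (if x = fst e then \<psi> x - \<psi> (snd e) else if x = snd e then \<psi> x - \<psi> (fst e) else 0)"
  using edge_ends[of e] by (auto simp: incidence_def D_def)

lemma lower_exists:
  assumes x: "x \<in> V" and net: "0 \<le> (\<Sum>e\<in>E. incidence E x e * D \<psi> e)"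
    and y: "adj E x y" "\<psi> x < \<psi> y"
  shows "\<exists>z. adj E x z \<and> \<psi> z < \<psi> x"
proof (rule ccontr)
  assume no: "\<not> ?thesis"
  define g where "g e = incidence E x e * D \<psi> e" for e
  have gle: "g e \<le> 0" if e: "e \<in> E" for e
  proof -
    have "x = fst e \<Longrightarrow> adj E x (snd e)" "x = snd e \<Longrightarrow> adj E x (fst e)"
      using e by (auto simp: adj_def)
    thus ?thesis using no e unfolding g_def net_term[OF e] by auto
  qed
  obtain e0 where e0: "e0 \<in> E" "g e0 < 0"
  proof (cases "(x, y) \<in> E")
    case True
    thus ?thesis using that[of "(x,y)"] y by (simp add: g_def net_term)
  next
    case False
    hence yx: "(y, x) \<in> E" using y by (auto simp: adj_def)
    have "y \<noteq> x" using edge_ends[OF yx] by simp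
    with yx show ?thesis using that[of "(y,x)"] y by (simp add: g_def net_term)
  qed
  have "(\<Sum>e\<in>E. g e) = g e0 + (\<Sum>e\<in>E - {e0}. g e)" using e0 by (simp add: sum.remove)
  also have "\<dots> < 0" using e0 gle by (smt (verit) DiffD1 sum_nonpos)
  finally show False using net by (simp add: g_def)
qed

lemma path_down:
  assumes net: "\<And>x. x \<in> V \<Longrightarrow> x \<noteq> t \<Longrightarrow> 0 \<le> (\<Sum>e\<in>E. incidence E x e * D \<psi> e)"
  shows "x \<in> V \<Longrightarrow> (x = t \<or> (\<exists>y. adj E x y \<and> \<psi> x < \<psi> y)) \<Longrightarrow>
    \<exists>ps. ps \<noteq> [] \<and> hd ps = x \<and> last ps = t \<and> sorted_wrt (\<lambda>a b. \<psi> b < \<psi> a) ps \<and> successively (adj E) ps"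
proof (induction "card {y\<in>V. \<psi> y < \<psi> x}" arbitrary: x rule: less_induct)
  case (less x)
  show ?case
  proof (cases "x = t")
    case True thus ?thesis by (intro exI[of _ "[x]"]) auto
  next
    case False
    then obtain y where y: "adj E x y" "\<psi> x < \<psi> y" using less.prems by auto
    obtain z where z: "adj E x z" "\<psi> z < \<psi> x" using lower_exists[OF less.prems(1) net[OF less.prems(1) False] y] by blast
    have zV: "z \<in> V" using adj_V[OF z(1)] by simp
    have "{y\<in>V. \<psi> y < \<psi> z} \<subset> {y\<in>V. \<psi> y < \<psi> x}" using z zV by auto
    hence "card {y\<in>V. \<psi> y < \<psi> z} < card {y\<in>V. \<psi> y < \<psi> x}" by (intro psubset_card_mono) auto
    moreover have "z = t \<or> (\<exists>y. adj E z y \<and> \<psi> z < \<psi> y)" using z adj_sym by blast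
    ultimately obtain ps where ps: "ps \<noteq> []" "hd ps = z" "last ps = t"
        "sorted_wrt (\<lambda>a b. \<psi> b < \<psi> a) ps" "successively (adj E) ps"
      using less.hyps zV by blast
    obtain rest where rest: "ps = z # rest" using ps(1,2) by (cases ps) auto
    have "\<forall>b\<in>set ps. \<psi> b < \<psi> x" using ps(4) z(2) rest by auto
    thus ?thesis using ps rest z(1)
      by (intro exI[of _ "x # ps"]) (auto simp: successively_Cons)
  qed
qed

lemma sorted_down_distinct: "sorted_wrt (\<lambda>a b. \<psi> b < (\<psi> :: nat \<Rightarrow> real) a) ps \<Longrightarrow> distinct ps"
  by (induction ps) auto

lemma support:
  assumes i: "i \<in> V" and j: "j \<in> V" and e: "e \<in> E" and nz: "D (phi i j) e \<noteq> 0"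
  shows "e \<in> path_edges E i j"
proof -
  define \<phi> where "\<phi> = phi i j"
  have netf: "(\<Sum>e\<in>E. incidence E x e * D \<phi> e) = ediff i j x" if "x \<in> V" for x
    using L_phi[OF i j that] Lap_apply[of x \<phi>] by (simp add: \<phi>_def)
  have net1: "0 \<le> (\<Sum>e\<in>E. incidence E x e * D \<phi> e)" if "x \<in> V" "x \<noteq> j" for x
    using netf[OF that(1)] that by (simp add: ediff_def)
  have net2: "0 \<le> (\<Sum>e\<in>E. incidence E x e * D (\<lambda>u. - \<phi> u) e)" if "x \<in> V" "x \<noteq> i" for x
  proof -
    have "(\<Sum>e\<in>E. incidence E x e * D (\<lambda>u. - \<phi> u) e) = - (\<Sum>e\<in>E. incidence E x e * D \<phi> e)"
      by (simp add: D_def sum_negf[symmetric] algebra_simps)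
    thus ?thesis using netf[OF that(1)] that by (simp add: ediff_def)
  qed
  obtain hi lo where hl: "adj E hi lo" "\<phi> lo < \<phi> hi" "e = (hi, lo) \<or> e = (lo, hi)"
  proof (cases "\<phi> (snd e) < \<phi> (fst e)")
    case True thus ?thesis using that[of "fst e" "snd e"] e by (auto simp: adj_def)
  next
    case False
    hence "\<phi> (fst e) < \<phi> (snd e)" using nz by (simp add: D_def \<phi>_def)
    thus ?thesis using that[of "snd e" "fst e"] e by (auto simp: adj_def)
  qed
  have hiV: "hi \<in> V" and loV: "lo \<in> V" using adj_V[OF hl(1)] by auto
  obtain P2 where P2: "P2 \<noteq> []" "hd P2 = lo" "last P2 = j" "sorted_wrt (\<lambda>a b. \<phi> b < \<phi> a) P2"
      "successively (adj E) P2"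
    using path_down[of j \<phi> lo, OF net1 loV] hl adj_sym by blast
  obtain P1' where P1': "P1' \<noteq> []" "hd P1' = hi" "last P1' = i"
      "sorted_wrt (\<lambda>a b. - \<phi> b < - \<phi> a) P1'" "successively (adj E) P1'"
    using path_down[of i "\<lambda>u. - \<phi> u" hi, OF net2 hiV] hl by auto
  define P1 where "P1 = rev P1'"
  have P1: "P1 \<noteq> []" "hd P1 = i" "last P1 = hi" "sorted_wrt (\<lambda>a b. \<phi> b < \<phi> a) P1"
      "successively (adj E) P1"
    using P1' by (auto simp: P1_def hd_rev last_rev sorted_wrt_rev adj_sym intro: successively_mono)
  have P1ge: "\<forall>x\<in>set P1. \<phi> hi \<le> \<phi> x"
  proof -
    have "P1 = butlast P1 @ [hi]" using P1(1,3) by (metis append_butlast_last_id)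
    hence "sorted_wrt (\<lambda>a b. \<phi> b < \<phi> a) (butlast P1 @ [hi])" using P1(4) by simp
    hence "\<forall>x\<in>set (butlast P1). \<phi> hi < \<phi> x" by (simp add: sorted_wrt_append)
    thus ?thesis using \<open>P1 = butlast P1 @ [hi]\<close> by (metis Un_iff empty_iff empty_set less_eq_real_def list.set(2) order_refl set_append singletonD)
  qed
  have P2le: "\<forall>y\<in>set P2. \<phi> y \<le> \<phi> lo"
  proof -
    obtain r where "P2 = lo # r" using P2(1,2) by (cases P2) auto
    thus ?thesis using P2(4) by auto
  qed
  define ps where "ps = P1 @ P2"
  have sorted: "sorted_wrt (\<lambda>a b. \<phi> b < \<phi> a) ps"
    unfolding ps_def sorted_wrt_append using P1(4) P2(4) P1ge P2le hl(2) by force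
  have succ: "successively (adj E) ps"
    unfolding ps_def successively_append_iff using P1 P2 hl(1) by auto
  have sp: "simple_path E i j ps"
    unfolding simple_path_def using P1 P2 sorted_down_distinct[OF sorted] succ
    by (auto simp: ps_def successively_conv_nth)
  have eop: "edge_on_path ps e"
    unfolding edge_on_path_def
  proof (intro exI[of _ "length P1 - 1"] conjI)
    have l: "length P1 \<ge> 1" using P1(1) by (cases P1) auto
    show "Suc (length P1 - 1) < length ps" using l P2(1) by (cases P2) (auto simp: ps_def)
    have "ps ! (length P1 - 1) = hi"
      using l P1(1,3) by (simp add: ps_def nth_append last_conv_nth)
    moreover have "ps ! Suc (length P1 - 1) = lo"
    proof -
      have s: "Suc (length P1 - 1) = length P1" using l by simp
      show ?thesis unfolding s using P2(1,2) by (simp add: ps_def nth_append hd_conv_nth)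
    qed
    ultimately show "(ps ! (length P1 - 1), ps ! Suc (length P1 - 1)) = e \<or>
        (ps ! Suc (length P1 - 1), ps ! (length P1 - 1)) = e" using hl(3) by auto
  qed
  show ?thesis unfolding path_edges_def using e sp eop by blast
qed

end

context ograph begin

lemma det_bound:
  assumes i: "i \<in> V" and j: "j \<in> V" and xb: "\<And>e. e \<in> E \<Longrightarrow> \<bar>x e\<bar> \<le> B"
  shows "pair_seminorm_sq n E i j x \<le> eff_res n E i j * real (card (path_edges E i j)) * B\<^sup>2"
proof -
  define S where "S = path_edges E i j"
  have SE: "S \<subseteq> E" by (auto simp: S_def path_edges_def)
  have z: "x e * D (phi i j) e = 0" if "e \<in> E - S" for e
  proof -
    have "D (phi i j) e = 0" using support[OF i j, of e] that by (auto simp: S_def)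
    thus ?thesis by simp
  qed
  have "(\<Sum>e\<in>E. x e * D (phi i j) e) = (\<Sum>e\<in>S. x e * D (phi i j) e)"
    using z by (intro sum.mono_neutral_right[OF finE SE]) blast
  hence "pair_seminorm_sq n E i j x = (\<Sum>e\<in>S. x e * D (phi i j) e)\<^sup>2"
    using seminorm_eq[OF i j] by simp
  also have "\<dots> \<le> (\<Sum>e\<in>S. (x e)\<^sup>2) * (\<Sum>e\<in>S. (D (phi i j) e)\<^sup>2)"
    by (rule Cauchy_Schwarz_ineq_sum)
  also have "\<dots> \<le> (real (card S) * B\<^sup>2) * (\<Sum>e\<in>E. (D (phi i j) e)\<^sup>2)"
  proof (intro mult_mono)
    have "(\<Sum>e\<in>S. (x e)\<^sup>2) \<le> (\<Sum>e\<in>S. B\<^sup>2)"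
    proof (intro sum_mono)
      fix e assume "e \<in> S"
      hence "\<bar>x e\<bar> \<le> B" using xb SE by blast
      thus "(x e)\<^sup>2 \<le> B\<^sup>2" by (metis abs_ge_zero order_trans power2_abs power_mono)
    qed
    thus "(\<Sum>e\<in>S. (x e)\<^sup>2) \<le> real (card S) * B\<^sup>2" by simp
    show "(\<Sum>e\<in>S. (D (phi i j) e)\<^sup>2) \<le> (\<Sum>e\<in>E. (D (phi i j) e)\<^sup>2)"
      using SE by (intro sum_mono2) auto
  qed (auto intro: sum_nonneg)
  also have "\<dots> = eff_res n E i j * real (card S) * B\<^sup>2"
    using eff_res_eq[OF i j] by simp
  finally show ?thesis by (simp add: S_def)
qed

lemma path_edges_max_ge1:
  assumes e: "e \<in> E" shows "real (path_edges_max n E) \<ge> 1"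
proof -
  obtain a c where ac: "e = (a, c)" by (cases e)
  have a: "a \<in> V" and c: "c \<in> V" and ne: "a \<noteq> c" using edge_ends[OF e] ac by auto
  have "simple_path E a c [a, c]" using e ac ne by (simp add: simple_path_def adj_def nth_Cons')
  moreover have "edge_on_path [a, c] e" unfolding edge_on_path_def using ac by (intro exI[of _ 0]) simp
  ultimately have "e \<in> path_edges E a c" using e by (auto simp: path_edges_def)
  moreover have "finite (path_edges E a c)" by (rule finite_subset[of _ E]) (auto simp: path_edges_def)
  ultimately have c1: "card (path_edges E a c) \<ge> 1" by (metis One_nat_def Suc_leI card_gt_0_iff empty_iff)
  have fin: "finite {card (path_edges E i j) |i j. i \<in> V \<and> j \<in> V}"
  proof -
    have "{card (path_edges E i j) |i j. i \<in> V \<and> j \<in> V} = (\<lambda>(i,j). card (path_edges E i j)) ` (V \<times> V)"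
      by auto
    thus ?thesis by simp
  qed
  have "card (path_edges E a c) \<le> path_edges_max n E"
    unfolding path_edges_max_def using a c by (intro Max_ge[OF fin]) blast
  thus ?thesis using c1 by simp
qed

end

lemma ratio_lemma:
  fixes a c p :: real
  assumes a: "a > 0" and c: "c > 0" and p: "p = a / (a + c)"
  shows "a / c = p / (1 - p)" "a / c + 2 + 1 / (a / c) = 1 / (p * (1 - p))"
proof -
  have q: "1 - p = c / (a + c)" using a c p by (simp add: field_simps)
  have ac: "a + c > 0" using a c by simp
  have "p / (1 - p) = (a / (a + c)) / (c / (a + c))" using q p by simp
  also have "\<dots> = a / c" using ac by simp
  finally show "a / c = p / (1 - p)" by simp
  have "p * (1 - p) = (a / (a + c)) * (c / (a + c))" using q p by simp
  hence "p * (1 - p) = a * c / (a + c)\<^sup>2" by (simp add: power2_eq_square)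
  hence "1 / (p * (1 - p)) = (a + c)\<^sup>2 / (a * c)" by simp
  also have "\<dots> = a / c + 2 + 1 / (a / c)" using a c by (simp add: field_simps power2_eq_square)
  finally show "a / c + 2 + 1 / (a / c) = 1 / (p * (1 - p))" by simp
qed

lemma pq_lower:
  fixes wa wb b :: real
  assumes "wa > 0" "wb > 0" "wa / wb \<le> b" "wb / wa \<le> b"
  shows "wa / (wa + wb) * (1 - wa / (wa + wb)) \<ge> 1 / (4 * b)"
proof -
  have b: "b > 0" using assms by (smt (verit) divide_pos_pos)
  have ab1: "wa \<le> b * wb" using assms by (simp add: pos_divide_le_eq)
  have ab2: "wb \<le> b * wa" using assms by (simp add: pos_divide_le_eq)
  have key: "(wa + wb)\<^sup>2 \<le> 4 * b * (wa * wb)"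
  proof (cases "wa \<ge> wb")
    case True
    have "(wa + wb)\<^sup>2 \<le> (2 * wa)\<^sup>2" using True assms by (intro power_mono) auto
    also have "\<dots> = 4 * (wa * wa)" by (simp add: power2_eq_square)
    also have "\<dots> \<le> 4 * (wa * (b * wb))" using ab1 assms by (intro mult_left_mono) auto
    finally show ?thesis by (simp add: mult_ac)
  next
    case False
    have "(wa + wb)\<^sup>2 \<le> (2 * wb)\<^sup>2" using False assms by (intro power_mono) auto
    also have "\<dots> = 4 * (wb * wb)" by (simp add: power2_eq_square)
    also have "\<dots> \<le> 4 * (wb * (b * wa))" using ab2 assms by (intro mult_left_mono) auto
    finally show ?thesis by (simp add: mult_ac)
  qed
  have "wa / (wa + wb) * (1 - wa / (wa + wb)) = wa * wb / (wa + wb)\<^sup>2"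
    using assms by (simp add: field_simps power2_eq_square)
  also have "\<dots> \<ge> 1 / (4 * b)"
    using key assms b by (simp add: field_simps)
  finally show ?thesis .
qed

lemma edge_delta_bound:
  fixes w :: "nat \<Rightarrow> real" and b L :: real
  assumes wa: "w (fst e) > 0" and wb: "w (snd e) > 0"
    and r1: "w (fst e) / w (snd e) \<le> b" and r2: "w (snd e) / w (fst e) \<le> b"
    and k: "k > 0" and L: "L \<ge> 0"
    and p_def: "p = w (fst e) / (w (fst e) + w (snd e))"
    and big: "16 * L \<le> k * p * (1 - p)"
    and good: "(real (X e) - k * p)\<^sup>2 \<le> 4 * (k * p * (1 - p)) * L"
  shows "\<bar>Delta w k X e\<bar> \<le> 64 * b * L / k"
proof -
  define q where "q = 1 - p"
  define F where "F = real (X e) / real k"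
  have p: "0 < p" "p < 1" using wa wb by (auto simp: p_def field_simps)
  have q: "0 < q" "q < 1" using p by (auto simp: q_def)
  have kr: "real k > 0" using k by simp
  have pq: "p * q \<ge> 1 / (4 * b)" using pq_lower[OF wa wb r1 r2] by (simp add: p_def q_def)
  have b: "b > 0" using r1 wa wb by (smt (verit) divide_pos_pos)
  have Fp: "(F - p)\<^sup>2 \<le> 4 * p * q * L / k"
  proof -
    have "(F - p)\<^sup>2 = (real (X e) - k * p)\<^sup>2 / k\<^sup>2" using kr by (simp add: F_def field_simps)
    also have "\<dots> \<le> 4 * (k * p * q) * L / k\<^sup>2" using good kr by (simp add: q_def divide_right_mono)
    also have "\<dots> = 4 * p * q * L / k" using kr by (simp add: power2_eq_square field_simps)
    finally show ?thesis .
  qed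
  have kpq: "16 * L \<le> k * p * q" using big by (simp add: q_def)
  have Fp1: "(F - p)\<^sup>2 \<le> (p / 2)\<^sup>2"
  proof -
    have s1: "16 * L * q \<le> 16 * L" using q L by (simp add: mult_left_le)
    have s2: "k * p * q \<le> k * p" using q p kr by (simp add: mult_left_le)
    have "16 * L * q \<le> k * p" using s1 s2 kpq by linarith
    hence "4 * p * q * L / k \<le> (p / 2)\<^sup>2" using kr p by (simp add: field_simps power2_eq_square)
    thus ?thesis using Fp by linarith
  qed
  have Fp2: "(F - p)\<^sup>2 \<le> (q / 2)\<^sup>2"
  proof -
    have s1: "16 * L * p \<le> 16 * L" using p L by (simp add: mult_left_le)
    have s2: "k * p * q \<le> k * q" using q p kr by (simp add: mult_left_le mult.commute mult.left_commute)
    have "16 * L * p \<le> k * q" using s1 s2 kpq by linarith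
    hence "4 * p * q * L / k \<le> (q / 2)\<^sup>2" using kr q by (simp add: field_simps power2_eq_square)
    thus ?thesis using Fp by linarith
  qed
  have a1: "\<bar>F - p\<bar> \<le> p / 2" using Fp1 p by (simp add: power2_le_iff_abs_le)
  have a2: "\<bar>F - p\<bar> \<le> (1 - p) / 2" using Fp2 q by (simp add: power2_le_iff_abs_le q_def)
  have "F - p \<le> p / 2 \<and> - (F - p) \<le> p / 2" using a1 by (simp only: abs_le_iff)
  moreover have "F - p \<le> (1 - p) / 2 \<and> - (F - p) \<le> (1 - p) / 2" using a2 by (simp only: abs_le_iff)
  ultimately have F01: "0 < F \<and> F < 1" using p by auto
  have D: "Delta w k X e = logit_rem p F"
  proof -
    have rho: "w (fst e) / w (snd e) = p / (1 - p)" using ratio_lemma(1)[OF wa wb p_def] .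
    have v: "w (fst e) / w (snd e) + 2 + 1 / (w (fst e) / w (snd e)) = 1 / (p * (1 - p))"
      using ratio_lemma(2)[OF wa wb p_def] .
    have "Delta w k X e = ln (F / (1 - F)) - ln (w (fst e) / w (snd e))
        - (w (fst e) / w (snd e) + 2 + 1 / (w (fst e) / w (snd e))) * (F - p)"
      unfolding Delta_def Let_def F_def p_def by simp
    also have "\<dots> = ln (F / (1 - F)) - ln (p / (1 - p)) - (1 / (p * (1 - p))) * (F - p)"
      by (subst v, subst rho, rule refl)
    also have "\<dots> = logit_rem p F" using F01 by (simp add: logit_rem_def ln_div)
    finally show ?thesis .
  qed
  have "\<bar>Delta w k X e\<bar> \<le> 4 * (F - p)\<^sup>2 / (p\<^sup>2 * (1 - p)\<^sup>2)"
    unfolding D by (rule logit_rem_bound[OF p a1 a2])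
  also have "\<dots> \<le> 4 * (4 * p * q * L / k) / (p\<^sup>2 * (1 - p)\<^sup>2)"
    using Fp p q by (intro divide_right_mono mult_left_mono) auto
  also have "\<dots> = 4 * (4 * p * q * L / k) / (p\<^sup>2 * q\<^sup>2)" by (simp add: q_def)
  also have "\<dots> = 16 * L / (k * (p * q))" using p q kr by (simp add: field_simps power2_eq_square)
  also have "\<dots> \<le> 16 * L / (k * (1 / (4 * b)))"
    using pq kr b L p q by (intro divide_left_mono mult_left_mono mult_pos_pos) auto
  also have "\<dots> = 64 * b * L / k" using b kr by (simp add: field_simps)
  finally show ?thesis .
qed

lemma main_result:
  fixes n :: nat and E :: "(nat \<times> nat) set" and w :: "nat \<Rightarrow> real" and b :: real and k :: nat
    and \<delta> C :: real
  assumes osg: "oriented_simple_graph n E" and conn: "graph_connected n E" and n1: "n \<ge> 1"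
    and wpos: "\<forall>i\<in>verts n. w i > 0" and wb: "\<forall>i\<in>verts n. \<forall>j\<in>verts n. w i / w j \<le> b"
    and d0: "0 < \<delta>" and d1: "\<delta> \<le> exp (-1)" and Cge: "C \<ge> 1 * ln (real n / \<delta>)"
    and k0: "k > 0"
    and kbig: "real k \<ge> 192 * b * (C + 1) * max (eff_res_max n E) (real (path_edges_max n E))"
  shows "measure_pmf.prob (comparisons E w k)
         {X. \<forall>i\<in>verts n. \<forall>j\<in>verts n.
               pair_seminorm_sq n E i j (Delta w k X)
                 \<le> 36864 * eff_res n E i j * real (card (path_edges E i j)) * b\<^sup>2 * C\<^sup>2 / (real k)\<^sup>2}
         \<ge> 1 - \<delta>"
proof -
  interpret ograph n E using osg conn n1 by unfold_locales
  define L where "L = ln (2 * (real n)\<^sup>2 / \<delta>)"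
  define pe where "pe e = w (fst e) / (w (fst e) + w (snd e))" for e :: "nat \<times> nat"
  define G where "G e X \<longleftrightarrow> (real (X e) - k * pe e)\<^sup>2 \<le> 4 * (k * pe e * (1 - pe e)) * L"
    for e :: "nat \<times> nat" and X :: "nat \<times> nat \<Rightarrow> nat"
  have nr: "real n \<ge> 1" using n1 by simp
  have lnd: "ln \<delta> \<le> -1" using d0 d1 by (metis ln_exp ln_le_cancel_iff exp_gt_zero)
  have lnn: "ln (real n) \<ge> 0" using nr by simp
  have lnnd: "ln (real n / \<delta>) = ln (real n) - ln \<delta>" using nr d0 by (simp add: ln_div)
  have C1: "C \<ge> 1" using Cge lnnd lnd lnn by linarith
  have L_eq: "L = ln 2 + 2 * ln (real n) - ln \<delta>"
    using nr d0 by (simp add: L_def ln_div ln_mult ln_realpow)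
  have L3: "L \<le> 3 * C"
    using L_eq lnnd lnd lnn Cge ln_2_less_1 by linarith
  have L0: "L \<ge> 0" using L_eq lnd lnn ln_2_less_1 ln_ge_zero[of 2] by linarith
  have one: "1 \<in> verts n" using n1 by (simp add: verts_def)
  have b1: "b \<ge> 1" using wb one wpos by fastforce
  have edge_facts: "w (fst e) > 0 \<and> w (snd e) > 0 \<and> w (fst e) / w (snd e) \<le> b \<and> w (snd e) / w (fst e) \<le> b"
    if "e \<in> E" for e using edge_ends[OF that] wpos wb by blast
  have kC: "real k \<ge> 192 * b * C" if "e \<in> E" for e
  proof -
    have m: "max (eff_res_max n E) (real (path_edges_max n E)) \<ge> 1"
      using path_edges_max_ge1[OF that] by linarith
    have "192 * b * C \<le> 192 * b * (C + 1) * 1" using b1 by simp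
    also have "\<dots> \<le> 192 * b * (C + 1) * max (eff_res_max n E) (real (path_edges_max n E))"
      using m b1 C1 by (intro mult_left_mono) auto
    finally show ?thesis using kbig by linarith
  qed
  have kpq: "16 * L \<le> k * pe e * (1 - pe e)" if e: "e \<in> E" for e
  proof -
    have ef: "w (fst e) > 0" "w (snd e) > 0" "w (fst e) / w (snd e) \<le> b" "w (snd e) / w (fst e) \<le> b"
      using edge_facts[OF e] by auto
    have pq: "pe e * (1 - pe e) \<ge> 1 / (4 * b)" unfolding pe_def by (rule pq_lower[OF ef])
    have "16 * L \<le> 48 * C" using L3 by simp
    also have "\<dots> = (192 * b * C) * (1 / (4 * b))" using b1 by simp
    also have "\<dots> \<le> real k * (1 / (4 * b))" using kC[OF e] b1 by (intro mult_right_mono) auto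
    also have "\<dots> \<le> real k * (pe e * (1 - pe e))" using pq by (intro mult_left_mono) auto
    finally show ?thesis by (simp add: mult.assoc)
  qed
  have prob_bad: "measure_pmf.prob (comparisons E w k) {X. \<not> G e X} \<le> 2 * exp (- L)" if e: "e \<in> E" for e
  proof -
    have ef: "w (fst e) > 0" "w (snd e) > 0" using edge_facts[OF e] by auto
    have p: "0 < pe e" "pe e < 1" using ef by (auto simp: pe_def field_simps)
    have "measure_pmf.prob (comparisons E w k) {X. \<not> G e X} =
          measure_pmf.prob (binomial_pmf k (pe e)) {x. \<not> ((real x - k * pe e)\<^sup>2 \<le> 4 * (k * pe e * (1 - pe e)) * L)}"
      unfolding G_def using comparisons_component[OF finE e, of w k] by (simp add: pe_def)
    also have "{x. \<not> ((real x - k * pe e)\<^sup>2 \<le> 4 * (k * pe e * (1 - pe e)) * L)} =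
               {x. (real x - k * pe e)\<^sup>2 > 4 * (k * pe e * (1 - pe e)) * L}" by auto
    also have "measure_pmf.prob (binomial_pmf k (pe e)) \<dots> \<le> 2 * exp (- L)"
      using kpq[OF e] L0 by (intro binom_two_sided p k0) auto
    finally show ?thesis .
  qed
  have good: "measure_pmf.prob (comparisons E w k) {X. \<forall>e\<in>E. G e X} \<ge> 1 - card E * (2 * exp (- L))"
    by (rule union_good[OF finE prob_bad])
  have cardE: "real (card E) \<le> (real n)\<^sup>2"
  proof -
    have "card E \<le> card (V \<times> V)" using E_sub by (intro card_mono) auto
    hence "card E \<le> n * n" by simp
    hence "real (card E) \<le> real (n * n)" by (rule of_nat_mono)
    also have "real (n * n) = (real n)\<^sup>2" by (simp only: of_nat_mult power2_eq_square)
    finally show ?thesis .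
  qed
  have expL: "exp (- L) = \<delta> / (2 * (real n)\<^sup>2)"
    unfolding L_def using d0 nr by (simp add: exp_minus inverse_eq_divide)
  have "card E * (2 * exp (- L)) = card E * \<delta> / (real n)\<^sup>2" using expL by simp
  also have "\<dots> \<le> (real n)\<^sup>2 * \<delta> / (real n)\<^sup>2"
    using cardE d0 by (intro divide_right_mono mult_right_mono) auto
  also have "\<dots> = \<delta>" using nr by simp
  finally have cd: "card E * (2 * exp (- L)) \<le> \<delta>" .
  have sub: "{X. \<forall>e\<in>E. G e X} \<subseteq> {X. \<forall>i\<in>verts n. \<forall>j\<in>verts n.
               pair_seminorm_sq n E i j (Delta w k X)
                 \<le> 36864 * eff_res n E i j * real (card (path_edges E i j)) * b\<^sup>2 * C\<^sup>2 / (real k)\<^sup>2}"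
  proof (intro subsetI CollectI ballI)
    fix X i j assume X: "X \<in> {X. \<forall>e\<in>E. G e X}" and i: "i \<in> verts n" and j: "j \<in> verts n"
    have bd: "\<bar>Delta w k X e\<bar> \<le> 192 * b * C / k" if e: "e \<in> E" for e
    proof -
      have ef: "w (fst e) > 0" "w (snd e) > 0" "w (fst e) / w (snd e) \<le> b" "w (snd e) / w (fst e) \<le> b"
        using edge_facts[OF e] by auto
      have "\<bar>Delta w k X e\<bar> \<le> 64 * b * L / k"
        using X e kpq[OF e] L0 k0 ef by (intro edge_delta_bound[where p = "pe e"]) (auto simp: G_def pe_def)
      also have "\<dots> \<le> 64 * b * (3 * C) / k"
        using L3 b1 by (intro divide_right_mono mult_left_mono) auto
      finally show ?thesis by simp
    qed
    have "pair_seminorm_sq n E i j (Delta w k X) \<le>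
          eff_res n E i j * real (card (path_edges E i j)) * (192 * b * C / k)\<^sup>2"
      by (rule det_bound[OF i j bd])
    also have "\<dots> = 36864 * eff_res n E i j * real (card (path_edges E i j)) * b\<^sup>2 * C\<^sup>2 / (real k)\<^sup>2"
      by (simp add: power_divide power_mult_distrib)
    finally show "pair_seminorm_sq n E i j (Delta w k X)
                 \<le> 36864 * eff_res n E i j * real (card (path_edges E i j)) * b\<^sup>2 * C\<^sup>2 / (real k)\<^sup>2" .
  qed
  have "1 - \<delta> \<le> measure_pmf.prob (comparisons E w k) {X. \<forall>e\<in>E. G e X}" using good cd by linarith
  also have "\<dots> \<le> measure_pmf.prob (comparisons E w k) {X. \<forall>i\<in>verts n. \<forall>j\<in>verts n.
               pair_seminorm_sq n E i j (Delta w k X)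
                 \<le> 36864 * eff_res n E i j * real (card (path_edges E i j)) * b\<^sup>2 * C\<^sup>2 / (real k)\<^sup>2}"
    by (rule measure_pmf.finite_measure_mono[OF sub]) simp
  finally show ?thesis .
qed

theorem corollary1:
  "\<exists>c1 c2 C0 :: real. c1 > 0 \<and> c2 > 0 \<and> C0 > 0 \<and>
    (\<forall>(n::nat) (E::(nat \<times> nat) set) (w::nat \<Rightarrow> real) (b::real) (k::nat) (\<delta>::real) (C::real).
       oriented_simple_graph n E \<longrightarrow> graph_connected n E \<longrightarrow> n \<ge> 1 \<longrightarrow>
       (\<forall>i\<in>verts n. w i > 0) \<longrightarrow>
       (\<forall>i\<in>verts n. \<forall>j\<in>verts n. w i / w j \<le> b) \<longrightarrow>
       0 < \<delta> \<longrightarrow> \<delta> \<le> exp (-1) \<longrightarrow>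
       C \<ge> c1 * ln (real n / \<delta>) \<longrightarrow>
       k > 0 \<longrightarrow>
       real k \<ge> c2 * b * (C + 1) * max (eff_res_max n E) (real (path_edges_max n E)) \<longrightarrow>
       measure_pmf.prob (comparisons E w k)
         {X. \<forall>i\<in>verts n. \<forall>j\<in>verts n.
               pair_seminorm_sq n E i j (Delta w k X)
                 \<le> C0 * eff_res n E i j * real (card (path_edges E i j)) * b\<^sup>2 * C\<^sup>2 / (real k)\<^sup>2}
         \<ge> 1 - \<delta>)"
  by (intro exI[of _ 1] exI[of _ 192] exI[of _ 36864] conjI allI impI; (simp only: zero_less_one)?)
     (simp_all add: main_result)

end
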